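(* Let $\alpha(k,b)=b/(k\ln b)\ge2$ and $b$ sufficiently large. In a uniformly random proper $k$-coloring of the complete tree $T$ with branching factor $b$, the probability that any given vertex of $T$ is not frozen is at most $b^{-1}$.
   Context: A vertex $v$ is frozen in coloring $\sigma$ if every proper coloring agreeing with $\sigma$ on the leaves of the subtree rooted at $v$ gives $v$ the color $\sigma(v)$; leaves are always frozen. *)

theory Defs
  imports Complex_Main "HOL-Library.FuncSet"
begin

text \<open>The complete tree with branching factor b and depth h: vertices are words over
  {0..<b} of length at most h; the root is [], the children of v are v @ [i] (i < b);
  the leaves are the words of length exactly h.\<close>

definition tree_vertices :: "nat \<Rightarrow> nat \<Rightarrow> nat list set" where
  "tree_vertices b h = {v. length v \<le> h \<and> (\<forall>x\<in>set v. x < b)}"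

definition tree_leaves :: "nat \<Rightarrow> nat \<Rightarrow> nat list set" where
  "tree_leaves b h = {v \<in> tree_vertices b h. length v = h}"

definition subtree :: "nat \<Rightarrow> nat \<Rightarrow> nat list \<Rightarrow> nat list set" where
  "subtree b h v = {w \<in> tree_vertices b h. \<exists>u. w = v @ u}"

definition proper_on :: "nat \<Rightarrow> nat list set \<Rightarrow> (nat list \<Rightarrow> nat) \<Rightarrow> bool" where
  "proper_on k S tau \<longleftrightarrow> (\<forall>w\<in>S. tau w < k) \<and>
     (\<forall>w i. w \<in> S \<longrightarrow> w @ [i] \<in> S \<longrightarrow> tau w \<noteq> tau (w @ [i]))"

text \<open>All proper k-colourings of the tree (as extensional functions, so the set is finite).\<close>
definition colorings :: "nat \<Rightarrow> nat \<Rightarrow> nat \<Rightarrow> (nat list \<Rightarrow> nat) set" where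
  "colorings b h k = {sigma \<in> tree_vertices b h \<rightarrow>\<^sub>E {..<k}. proper_on k (tree_vertices b h) sigma}"

definition frozen :: "nat \<Rightarrow> nat \<Rightarrow> nat \<Rightarrow> (nat list \<Rightarrow> nat) \<Rightarrow> nat list \<Rightarrow> bool" where
  "frozen b h k sigma v \<longleftrightarrow>
     (\<forall>tau. proper_on k (subtree b h v) tau \<longrightarrow>
        (\<forall>w \<in> subtree b h v \<inter> tree_leaves b h. tau w = sigma w) \<longrightarrow> tau v = sigma v)"

end

theory Submission
  imports Defs
begin


definition child :: "nat \<Rightarrow> nat \<Rightarrow> (nat list \<Rightarrow> nat) \<Rightarrow> nat \<Rightarrow> nat list \<Rightarrow> nat" where
  "child b h \<sigma> j = restrict (\<lambda>w. \<sigma> (j#w)) (tree_vertices b h)"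

definition glue :: "nat \<Rightarrow> nat \<Rightarrow> nat \<Rightarrow> (nat \<Rightarrow> nat list \<Rightarrow> nat) \<Rightarrow> nat list \<Rightarrow> nat" where
  "glue b h c F = (\<lambda>w. if w \<in> tree_vertices b (Suc h) then (case w of [] \<Rightarrow> c | j#w' \<Rightarrow> F j w') else undefined)"

lemma tv_nil[simp]: "[] \<in> tree_vertices b h"
  by (simp add: tree_vertices_def)

lemma tv_cons[simp]: "(j#w \<in> tree_vertices b (Suc h)) \<longleftrightarrow> j < b \<and> w \<in> tree_vertices b h"
  by (auto simp: tree_vertices_def)

lemma tv_cons_0[simp]: "j#w \<notin> tree_vertices b 0"
  by (auto simp: tree_vertices_def)

lemma tv_0: "tree_vertices b 0 = {[]}"
  by (auto simp: tree_vertices_def)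

lemma tv_finite: "finite (tree_vertices b h)"
proof -
  have "tree_vertices b h \<subseteq> {xs. set xs \<subseteq> {..<b} \<and> length xs \<le> h}"
    by (auto simp: tree_vertices_def)
  thus ?thesis using finite_lists_length_le[of "{..<b}" h] finite_subset by blast
qed

lemma col_finite: "finite (colorings b h k)"
proof -
  have "colorings b h k \<subseteq> tree_vertices b h \<rightarrow>\<^sub>E {..<k}" by (auto simp: colorings_def)
  moreover have "finite (tree_vertices b h \<rightarrow>\<^sub>E {..<k})" by (intro finite_PiE tv_finite) auto
  ultimately show ?thesis using finite_subset by blast
qed

lemma subtree_nil: "subtree b h [] = tree_vertices b h"
  by (auto simp: subtree_def)

lemma col_root: "\<sigma> \<in> colorings b h k \<Longrightarrow> \<sigma> [] < k"
  by (auto simp: colorings_def proper_on_def)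

lemma child_col:
  assumes "\<sigma> \<in> colorings b (Suc h) k" "j < b"
  shows "child b h \<sigma> j \<in> colorings b h k" "child b h \<sigma> j [] \<noteq> \<sigma> []"
proof -
  from assms have p: "proper_on k (tree_vertices b (Suc h)) \<sigma>" by (simp add: colorings_def)
  show "child b h \<sigma> j \<in> colorings b h k"
    unfolding colorings_def
  proof (intro CollectI conjI)
    show "child b h \<sigma> j \<in> tree_vertices b h \<rightarrow>\<^sub>E {..<k}"
      using p assms(2) unfolding proper_on_def child_def by auto
    show "proper_on k (tree_vertices b h) (child b h \<sigma> j)"
      unfolding proper_on_def
    proof (intro conjI allI impI ballI)
      fix w assume "w \<in> tree_vertices b h"
      thus "child b h \<sigma> j w < k" using p assms(2) unfolding proper_on_def child_def by auto
    next
      fix w i assume w: "w \<in> tree_vertices b h" "w @ [i] \<in> tree_vertices b h"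
      have "j#w \<in> tree_vertices b (Suc h)" "(j#w) @ [i] \<in> tree_vertices b (Suc h)" using w assms(2) by auto
      hence "\<sigma> (j#w) \<noteq> \<sigma> ((j#w) @ [i])" using p unfolding proper_on_def by blast
      thus "child b h \<sigma> j w \<noteq> child b h \<sigma> j (w @ [i])" using w unfolding child_def by simp
    qed
  qed
  show "child b h \<sigma> j [] \<noteq> \<sigma> []"
    using p assms(2) unfolding proper_on_def child_def
    by (metis append_Nil restrict_apply' tv_cons tv_nil)
qed

lemma glue_props:
  assumes "c < k" "F \<in> {..<b} \<rightarrow>\<^sub>E {\<tau> \<in> colorings b h k. \<tau> [] \<noteq> c}"
  shows "glue b h c F \<in> colorings b (Suc h) k" "glue b h c F [] = c"
    "\<And>j. j < b \<Longrightarrow> child b h (glue b h c F) j = F j"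
proof -
  have Fj: "\<And>j. j < b \<Longrightarrow> F j \<in> colorings b h k \<and> F j [] \<noteq> c" using assms(2) by auto
  show "glue b h c F [] = c" by (simp add: glue_def)
  show "\<And>j. j < b \<Longrightarrow> child b h (glue b h c F) j = F j"
  proof -
    fix j assume j: "j < b"
    have "F j \<in> tree_vertices b h \<rightarrow>\<^sub>E {..<k}" using Fj[OF j] by (simp add: colorings_def)
    hence ext: "F j \<in> extensional (tree_vertices b h)" by (simp add: PiE_def)
    show "child b h (glue b h c F) j = F j"
    proof
      fix w show "child b h (glue b h c F) j w = F j w"
      proof (cases "w \<in> tree_vertices b h")
        case True then show ?thesis using j by (simp add: child_def glue_def)
      next
        case False then show ?thesis using ext by (simp add: child_def extensional_def)
      qed
    qed
  qed
  show "glue b h c F \<in> colorings b (Suc h) k"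
    unfolding colorings_def
  proof (intro CollectI conjI)
    show "glue b h c F \<in> tree_vertices b (Suc h) \<rightarrow>\<^sub>E {..<k}"
    proof
      fix w assume "w \<in> tree_vertices b (Suc h)"
      thus "glue b h c F w \<in> {..<k}" using assms(1) Fj
        by (cases w) (auto simp: glue_def colorings_def)
    qed (auto simp: glue_def)
    show "proper_on k (tree_vertices b (Suc h)) (glue b h c F)"
      unfolding proper_on_def
    proof (intro conjI allI impI ballI)
      fix w assume "w \<in> tree_vertices b (Suc h)"
      thus "glue b h c F w < k" using assms(1) Fj
        by (cases w) (auto simp: glue_def colorings_def)
    next
      fix w i assume w: "w \<in> tree_vertices b (Suc h)" and wi: "w @ [i] \<in> tree_vertices b (Suc h)"
      show "glue b h c F w \<noteq> glue b h c F (w @ [i])"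
      proof (cases w)
        case Nil
        then show ?thesis using wi Fj by (auto simp: glue_def)
      next
        case (Cons j w')
        then have "j < b" "w' \<in> tree_vertices b h" "w' @ [i] \<in> tree_vertices b h" using w wi by auto
        then show ?thesis using Cons w wi Fj[of j] by (auto simp: glue_def colorings_def proper_on_def)
      qed
    qed
  qed
qed

lemma child_inj:
  assumes "\<sigma> \<in> colorings b (Suc h) k" "\<sigma>' \<in> colorings b (Suc h) k" "\<sigma> [] = \<sigma>' []"
    "\<And>j. j < b \<Longrightarrow> child b h \<sigma> j = child b h \<sigma>' j"
  shows "\<sigma> = \<sigma>'"
proof
  fix w
  show "\<sigma> w = \<sigma>' w"
  proof (cases "w \<in> tree_vertices b (Suc h)")
    case False
    then show ?thesis using assms(1,2) by (auto simp: colorings_def PiE_def extensional_def)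
  next
    case True
    show ?thesis
    proof (cases w)
      case Nil then show ?thesis using assms(3) by simp
    next
      case (Cons j w')
      then have "j < b" "w' \<in> tree_vertices b h" using True by auto
      then show ?thesis using assms(4)[of j] Cons unfolding child_def by (metis restrict_apply')
    qed
  qed
qed

lemma card_split:
  assumes "c < k"
  shows "card {\<sigma> \<in> colorings b (Suc h) k. \<sigma> [] = c \<and> (\<forall>j<b. R j (child b h \<sigma> j))}
    = (\<Prod>j<b. card {\<tau> \<in> colorings b h k. \<tau> [] \<noteq> c \<and> R j \<tau>})"
proof -
  let ?S = "{\<sigma> \<in> colorings b (Suc h) k. \<sigma> [] = c \<and> (\<forall>j<b. R j (child b h \<sigma> j))}"
  let ?f = "\<lambda>\<sigma>. \<lambda>j\<in>{..<b}. child b h \<sigma> j"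
  let ?T = "\<Pi>\<^sub>E j\<in>{..<b}. {\<tau> \<in> colorings b h k. \<tau> [] \<noteq> c \<and> R j \<tau>}"
  have inj: "inj_on ?f ?S"
  proof
    fix x y
    assume xy: "x \<in> ?S" "y \<in> ?S" and e: "?f x = ?f y"
    have "\<And>j. j < b \<Longrightarrow> child b h x j = child b h y j"
    proof -
      fix j assume "j < b"
      have "?f x j = ?f y j" using e by simp
      thus "child b h x j = child b h y j" using \<open>j < b\<close> by simp
    qed
    then show "x = y" using child_inj[of x b h k y] xy by auto
  qed
  have img: "?f ` ?S = ?T"
  proof
    show "?f ` ?S \<subseteq> ?T"
    proof
      fix F assume "F \<in> ?f ` ?S"
      then obtain \<sigma> where s: "\<sigma> \<in> ?S" and F: "F = ?f \<sigma>" by blast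
      show "F \<in> ?T" unfolding F
      proof (rule PiE_I)
        fix j assume j: "j \<in> {..<b}"
        have "child b h \<sigma> j \<in> colorings b h k" "child b h \<sigma> j [] \<noteq> \<sigma> []" "R j (child b h \<sigma> j)"
          using child_col[of \<sigma> b h k j] s j by auto
        thus "?f \<sigma> j \<in> {\<tau> \<in> colorings b h k. \<tau> [] \<noteq> c \<and> R j \<tau>}" using j s by simp
      qed simp
    qed
  next
    show "?T \<subseteq> ?f ` ?S"
    proof
      fix F assume F: "F \<in> ?T"
      have F': "F \<in> {..<b} \<rightarrow>\<^sub>E {\<tau> \<in> colorings b h k. \<tau> [] \<noteq> c}"
        using F by (auto simp: PiE_def Pi_def)
      note g = glue_props[OF assms F']
      have "\<forall>j<b. R j (child b h (glue b h c F) j)"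
      proof (intro allI impI)
        fix j assume "j < b"
        thus "R j (child b h (glue b h c F) j)" using g(3) F by (auto simp: PiE_def Pi_def)
      qed
      hence gs: "glue b h c F \<in> ?S" using g(1,2) by blast
      have "?f (glue b h c F) = F"
      proof
        fix j show "?f (glue b h c F) j = F j"
          using g(3)[of j] F by (cases "j < b") (auto simp: PiE_def extensional_def)
      qed
      hence e: "F = ?f (glue b h c F)" by simp
      show "F \<in> ?f ` ?S" by (rule image_eqI[where f="?f", OF e gs])
    qed
  qed
  have "card ?S = card ?T" using card_image[OF inj] img by simp
  also have "\<dots> = (\<Prod>j<b. card {\<tau> \<in> colorings b h k. \<tau> [] \<noteq> c \<and> R j \<tau>})"
    by (rule card_PiE) simp
  finally show ?thesis .
qed



lemma num_core:
  fixes m b :: nat and a x :: real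
  assumes m: "m \<ge> 1" and b: "b \<ge> 3" and hb: "real b \<ge> 2 * (real m + 1) * ln (real b)"
    and a: "a \<ge> 0" and x: "x \<ge> 0" and bx: "real b * x \<le> a"
  shows "real b * real m * (real m * a - a + x) ^ b \<le> (real m * a) ^ b"
proof -
  define y where "y = (1 - 1 / real b) / real m"
  have bpos: "real b > 0" using b by simp
  have mpos: "real m \<ge> 1" using m by simp
  have y0: "0 \<le> y" unfolding y_def using b mpos by (simp add: field_simps)
  have "real b \<le> real b * real m" using mpos bpos by simp
  hence bb: "real b \<le> 1 + real b * real m" by linarith
  have y1: "y \<le> 1" unfolding y_def using b mpos bb by (simp add: field_simps)
  have xa: "x \<le> a / real b" using bx bpos by (simp add: field_simps mult.commute)
  have "1 * a \<le> real m * a" by (rule mult_right_mono[OF mpos a])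
  hence T0: "0 \<le> real m * a - a + x" using x by linarith
  have T1: "real m * a - a + x \<le> real m * a * (1 - y)"
  proof -
    have "real m * a * (1 - y) = real m * a - a * (1 - 1 / real b)"
      unfolding y_def using mpos by (simp add: field_simps)
    also have "\<dots> = real m * a - a + a / real b" by (simp add: field_simps)
    finally show ?thesis using xa by simp
  qed
  have "(real m * a - a + x) ^ b \<le> (real m * a * (1 - y)) ^ b"
    by (rule power_mono[OF T1 T0])
  also have "\<dots> = (real m * a) ^ b * (1 - y) ^ b" by (simp add: power_mult_distrib)
  also have "\<dots> \<le> (real m * a) ^ b * exp (- y) ^ b"
  proof (rule mult_left_mono)
    show "(1 - y) ^ b \<le> exp (- y) ^ b"
      by (rule power_mono) (use exp_ge_add_one_self[of "-y"] y1 in auto)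
    show "0 \<le> (real m * a) ^ b" using a by simp
  qed
  also have "exp (- y) ^ b = exp (- (real b * y))" by (simp add: exp_of_nat_mult[symmetric])
  finally have P: "(real m * a - a + x) ^ b \<le> (real m * a) ^ b * exp (- (real b * y))" .
  have by_eq: "real b * y = (real b - 1) / real m" unfolding y_def using bpos mpos by (simp add: field_simps)
  have "(real b - 1) / (real m + 1) \<le> (real b - 1) / real m"
    using b mpos by (intro divide_left_mono) auto
  hence E1: "- (real b * y) \<le> 1 / (real m + 1) - real b / (real m + 1)"
    using by_eq by (simp add: diff_divide_distrib)
  have "1 / (real m + 1) \<le> 1 / 2" using mpos by (simp add: field_simps)
  moreover have "real b / (real m + 1) \<ge> 2 * ln (real b)" using hb mpos by (simp add: field_simps)
  ultimately have "- (real b * y) \<le> 1/2 - 2 * ln (real b)" using E1 by linarith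
  hence "exp (- (real b * y)) \<le> exp (1/2 - 2 * ln (real b))" by simp
  also have "\<dots> = exp (1/2) / real b ^ 2"
  proof -
    have "exp (2 * ln (real b)) = exp (ln (real b)) ^ 2"
      using exp_of_nat_mult[of 2 "ln (real b)"] by simp
    also have "\<dots> = real b ^ 2" using bpos by simp
    finally show ?thesis by (simp add: exp_diff)
  qed
  finally have E: "exp (- (real b * y)) \<le> exp (1/2) / real b ^ 2" .
  have lnb: "ln (real b) \<ge> 1"
  proof -
    have "exp 1 \<le> real b" using exp_le b by linarith
    thus ?thesis using bpos by (metis ln_exp ln_le_cancel_iff exp_gt_zero)
  qed
  have e2: "exp (1/2::real) \<le> 2"
  proof -
    have "exp (1/2::real) ^ 2 = exp 1" by (simp add: exp_of_nat_mult[symmetric])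
    hence "exp (1/2::real) ^ 2 \<le> 2 ^ 2" using exp_le by simp
    thus ?thesis by (rule power2_le_imp_le) simp
  qed
  have "real b * real m * exp (- (real b * y)) \<le> real b * real m * (exp (1/2) / real b ^ 2)"
    using E bpos mpos by (intro mult_left_mono) auto
  also have "\<dots> = real m * exp (1/2) / real b" using bpos by (simp add: power2_eq_square field_simps)
  also have "\<dots> \<le> 1"
  proof -
    have "real m * exp (1/2) \<le> (real m + 1) * (2 * ln (real b))"
      using e2 lnb mpos by (intro mult_mono) auto
    also have "\<dots> \<le> real b" using hb by (simp add: field_simps)
    finally show ?thesis using bpos by simp
  qed
  finally have K: "real b * real m * exp (- (real b * y)) \<le> 1" .
  have "real b * real m * (real m * a - a + x) ^ b
      \<le> real b * real m * ((real m * a) ^ b * exp (- (real b * y)))"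
    using P bpos mpos by (intro mult_left_mono) auto
  also have "\<dots> = (real m * a) ^ b * (real b * real m * exp (- (real b * y)))" by simp
  also have "\<dots> \<le> (real m * a) ^ b * 1"
    using K a by (intro mult_left_mono) auto
  finally show ?thesis by simp
qed



lemma subtree_cons:
  assumes "j < b" "w \<in> subtree b h v"
  shows "j # w \<in> subtree b (Suc h) (j # v)"
  using assms by (auto simp: subtree_def)

lemma leaves_cons:
  assumes "j < b" "w \<in> tree_leaves b h"
  shows "j # w \<in> tree_leaves b (Suc h)"
  using assms by (auto simp: tree_leaves_def)

lemma frozen_0: "frozen b 0 k \<sigma> []"
  unfolding frozen_def
proof (intro allI impI)
  fix tau assume "\<forall>w\<in>subtree b 0 [] \<inter> tree_leaves b 0. tau w = \<sigma> w"
  moreover have "[] \<in> subtree b 0 [] \<inter> tree_leaves b 0"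
    by (auto simp: subtree_def tree_leaves_def)
  ultimately show "tau [] = \<sigma> []" by blast
qed

lemma frozen_cons:
  assumes j: "j < b" and v: "v \<in> tree_vertices b h"
    and fr: "frozen b h k (child b h \<sigma> j) v"
  shows "frozen b (Suc h) k \<sigma> (j # v)"
  unfolding frozen_def
proof (intro allI impI)
  fix tau assume p: "proper_on k (subtree b (Suc h) (j # v)) tau"
    and lv: "\<forall>w\<in>subtree b (Suc h) (j # v) \<inter> tree_leaves b (Suc h). tau w = \<sigma> w"
  define tau' where "tau' = (\<lambda>w. tau (j # w))"
  have p': "proper_on k (subtree b h v) tau'"
    unfolding proper_on_def
  proof (intro conjI allI impI ballI)
    fix w assume "w \<in> subtree b h v"
    thus "tau' w < k" using p subtree_cons[OF j] unfolding proper_on_def tau'_def by blast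
  next
    fix w i assume w: "w \<in> subtree b h v" "w @ [i] \<in> subtree b h v"
    have "j # w \<in> subtree b (Suc h) (j # v)" "(j # w) @ [i] \<in> subtree b (Suc h) (j # v)"
      using subtree_cons[OF j w(1)] subtree_cons[OF j w(2)] by auto
    hence "tau (j # w) \<noteq> tau ((j # w) @ [i])" using p unfolding proper_on_def by blast
    thus "tau' w \<noteq> tau' (w @ [i])" unfolding tau'_def by simp
  qed
  have lv': "\<forall>w\<in>subtree b h v \<inter> tree_leaves b h. tau' w = child b h \<sigma> j w"
  proof
    fix w assume w: "w \<in> subtree b h v \<inter> tree_leaves b h"
    hence "j # w \<in> subtree b (Suc h) (j # v) \<inter> tree_leaves b (Suc h)"
      using subtree_cons[OF j] leaves_cons[OF j] by blast
    hence "tau (j # w) = \<sigma> (j # w)" using lv by blast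
    moreover have "w \<in> tree_vertices b h" using w by (auto simp: tree_leaves_def)
    ultimately show "tau' w = child b h \<sigma> j w" by (simp add: tau'_def child_def)
  qed
  have "tau' v = child b h \<sigma> j v" using fr p' lv' unfolding frozen_def by blast
  thus "tau (j # v) = \<sigma> (j # v)" using v by (simp add: tau'_def child_def)
qed

lemma frozen_root:
  assumes s: "\<sigma> \<in> colorings b (Suc h) k" and nf: "\<not> frozen b (Suc h) k \<sigma> []"
  shows "\<exists>c'\<in>{..<k} - {\<sigma> []}. \<forall>j<b. \<not> (frozen b h k (child b h \<sigma> j) [] \<and> child b h \<sigma> j [] = c')"
proof -
  obtain tau where p: "proper_on k (tree_vertices b (Suc h)) tau"
    and lv: "\<forall>w\<in>tree_vertices b (Suc h) \<inter> tree_leaves b (Suc h). tau w = \<sigma> w"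
    and ne: "tau [] \<noteq> \<sigma> []"
    using nf unfolding frozen_def subtree_nil by blast
  have ck: "tau [] < k" using p unfolding proper_on_def by simp
  have "\<forall>j<b. \<not> (frozen b h k (child b h \<sigma> j) [] \<and> child b h \<sigma> j [] = tau [])"
  proof (intro allI impI notI)
    fix j assume j: "j < b" and fc: "frozen b h k (child b h \<sigma> j) [] \<and> child b h \<sigma> j [] = tau []"
    define tau' where "tau' = (\<lambda>w. tau (j # w))"
    have p': "proper_on k (tree_vertices b h) tau'"
      unfolding proper_on_def
    proof (intro conjI allI impI ballI)
      fix w assume "w \<in> tree_vertices b h"
      thus "tau' w < k" using p j unfolding proper_on_def tau'_def by simp
    next
      fix w i assume w: "w \<in> tree_vertices b h" "w @ [i] \<in> tree_vertices b h"
      have "j # w \<in> tree_vertices b (Suc h)" "(j # w) @ [i] \<in> tree_vertices b (Suc h)"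
        using w j by auto
      hence "tau (j # w) \<noteq> tau ((j # w) @ [i])" using p unfolding proper_on_def by blast
      thus "tau' w \<noteq> tau' (w @ [i])" unfolding tau'_def by simp
    qed
    have lv': "\<forall>w\<in>subtree b h [] \<inter> tree_leaves b h. tau' w = child b h \<sigma> j w"
    proof
      fix w assume w: "w \<in> subtree b h [] \<inter> tree_leaves b h"
      hence "w \<in> tree_vertices b h" "w \<in> tree_leaves b h" by (auto simp: subtree_nil)
      hence "j # w \<in> tree_vertices b (Suc h) \<inter> tree_leaves b (Suc h)"
        using leaves_cons[OF j] j by auto
      hence "tau (j # w) = \<sigma> (j # w)" using lv by blast
      thus "tau' w = child b h \<sigma> j w" using \<open>w \<in> tree_vertices b h\<close> by (simp add: tau'_def child_def)
    qed
    have "tau' [] = child b h \<sigma> j []" using fc p' lv' unfolding frozen_def subtree_nil by blast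
    hence "tau [j] = tau []" using fc by (simp add: tau'_def)
    moreover have "[] @ [j] \<in> tree_vertices b (Suc h)" using j by simp
    ultimately show False using p unfolding proper_on_def by (metis append_Nil tv_nil)
  qed
  thus ?thesis using ck ne by blast
qed



fun aa :: "nat \<Rightarrow> nat \<Rightarrow> nat \<Rightarrow> nat" where
  "aa b k 0 = 1"
| "aa b k (Suc h) = ((k - 1) * aa b k h) ^ b"

lemma card_colors:
  assumes "finite C"
  shows "card {\<tau> \<in> colorings b h k. \<tau> [] \<in> C \<and> P \<tau>}
    = (\<Sum>c'\<in>C. card {\<tau> \<in> colorings b h k. \<tau> [] = c' \<and> P \<tau>})"
proof -
  have "{\<tau> \<in> colorings b h k. \<tau> [] \<in> C \<and> P \<tau>} = (\<Union>c'\<in>C. {\<tau> \<in> colorings b h k. \<tau> [] = c' \<and> P \<tau>})"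
    by auto
  moreover have "card (\<Union>c'\<in>C. {\<tau> \<in> colorings b h k. \<tau> [] = c' \<and> P \<tau>})
      = (\<Sum>c'\<in>C. card {\<tau> \<in> colorings b h k. \<tau> [] = c' \<and> P \<tau>})"
    by (rule card_UN_disjoint) (use assms col_finite in auto)
  ultimately show ?thesis by simp
qed

lemma card_ne:
  "card {\<tau> \<in> colorings b h k. \<tau> [] \<noteq> c \<and> P \<tau>}
    = (\<Sum>c'\<in>{..<k} - {c}. card {\<tau> \<in> colorings b h k. \<tau> [] = c' \<and> P \<tau>})"
proof -
  have "{\<tau> \<in> colorings b h k. \<tau> [] \<noteq> c \<and> P \<tau>} = {\<tau> \<in> colorings b h k. \<tau> [] \<in> {..<k} - {c} \<and> P \<tau>}"
    using col_root by fastforce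
  thus ?thesis using card_colors[of "{..<k} - {c}" b h k P] by simp
qed

lemma card_all:
  "card {\<tau> \<in> colorings b h k. P \<tau>}
    = (\<Sum>c'<k. card {\<tau> \<in> colorings b h k. \<tau> [] = c' \<and> P \<tau>})"
proof -
  have "{\<tau> \<in> colorings b h k. P \<tau>} = {\<tau> \<in> colorings b h k. \<tau> [] \<in> {..<k} \<and> P \<tau>}"
    using col_root by fastforce
  thus ?thesis using card_colors[of "{..<k}" b h k P] by simp
qed

lemma card_minus_one: "c < k \<Longrightarrow> card ({..<k} - {c}) = k - 1"
  by simp

lemma col0: "c < k \<Longrightarrow> {\<sigma> \<in> colorings b 0 k. \<sigma> [] = c} = {(\<lambda>w::nat list. if w = [] then c else undefined)}"
proof (intro equalityI subsetI)
  fix \<sigma> assume c: "c < k" and s: "\<sigma> \<in> {\<sigma> \<in> colorings b 0 k. \<sigma> [] = c}"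
  hence "\<sigma> \<in> extensional {[]}" by (auto simp: colorings_def PiE_def tv_0)
  hence "\<sigma> = (\<lambda>w::nat list. if w = [] then c else undefined)" using s
    by (auto simp: extensional_def)
  thus "\<sigma> \<in> {(\<lambda>w::nat list. if w = [] then c else undefined)}" by simp
next
  fix \<sigma> assume c: "c < k" and s: "\<sigma> \<in> {(\<lambda>w::nat list. if w = [] then c else undefined)}"
  thus "\<sigma> \<in> {\<sigma> \<in> colorings b 0 k. \<sigma> [] = c}"
    by (auto simp: colorings_def proper_on_def tv_0 PiE_def extensional_def split: if_splits)
qed

lemma A_eq: "c < k \<Longrightarrow> card {\<sigma> \<in> colorings b h k. \<sigma> [] = c} = aa b k h"
proof (induction h arbitrary: c)
  case 0
  then show ?case by (simp add: col0)
next
  case (Suc h)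
  have "card {\<sigma> \<in> colorings b (Suc h) k. \<sigma> [] = c}
      = card {\<sigma> \<in> colorings b (Suc h) k. \<sigma> [] = c \<and> (\<forall>j<b. (\<lambda>_ _. True) j (child b h \<sigma> j))}"
    by simp
  also have "\<dots> = (\<Prod>j<b. card {\<tau> \<in> colorings b h k. \<tau> [] \<noteq> c \<and> True})"
    by (rule card_split[OF Suc.prems])
  also have "card {\<tau> \<in> colorings b h k. \<tau> [] \<noteq> c \<and> True} = (k - 1) * aa b k h"
  proof -
    have "card {\<tau> \<in> colorings b h k. \<tau> [] \<noteq> c \<and> True}
        = (\<Sum>c'\<in>{..<k} - {c}. card {\<tau> \<in> colorings b h k. \<tau> [] = c' \<and> True})"
      by (rule card_ne)
    also have "\<dots> = (\<Sum>c'\<in>{..<k} - {c}. aa b k h)"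
      by (rule sum.cong) (use Suc.IH in auto)
    finally show ?thesis using Suc.prems by simp
  qed
  finally show ?case by simp
qed



lemma card_ne_all: "c < k \<Longrightarrow> card {\<tau> \<in> colorings b h k. \<tau> [] \<noteq> c} = (k - 1) * aa b k h"
proof -
  assume c: "c < k"
  have "card {\<tau> \<in> colorings b h k. \<tau> [] \<noteq> c} = card {\<tau> \<in> colorings b h k. \<tau> [] \<noteq> c \<and> True}" by simp
  also have "\<dots> = (\<Sum>c'\<in>{..<k} - {c}. card {\<tau> \<in> colorings b h k. \<tau> [] = c' \<and> True})"
    by (rule card_ne)
  also have "\<dots> = (\<Sum>c'\<in>{..<k} - {c}. aa b k h)"
    by (rule sum.cong) (use A_eq in auto)
  finally show ?thesis using c by simp
qed

lemma main_step_root: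
  fixes b k h c :: nat
  assumes b3: "b \<ge> 3" and hb: "real b \<ge> 2 * real k * ln (real b)" and c: "c < k"
    and IH: "\<And>c'. c' < k \<Longrightarrow> b * card {\<sigma> \<in> colorings b h k. \<sigma> [] = c' \<and> \<not> frozen b h k \<sigma> []} \<le> aa b k h"
  shows "b * card {\<sigma> \<in> colorings b (Suc h) k. \<sigma> [] = c \<and> \<not> frozen b (Suc h) k \<sigma> []} \<le> aa b k (Suc h)"
proof -
  define a where "a = aa b k h"
  define NF where "NF c' = card {\<sigma> \<in> colorings b h k. \<sigma> [] = c' \<and> \<not> frozen b h k \<sigma> []}" for c'
  define R where "R c' \<tau> = (\<not> (frozen b h k \<tau> [] \<and> \<tau> [] = c'))" for c' \<tau>
  define S where "S c' = {\<sigma> \<in> colorings b (Suc h) k. \<sigma> [] = c \<and> (\<forall>j<b. R c' (child b h \<sigma> j))}" for c'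
  define T where "T c' = card {\<tau> \<in> colorings b h k. \<tau> [] \<noteq> c \<and> R c' \<tau>}" for c'
  let ?C = "{..<k} - {c}"
  have sub: "{\<sigma> \<in> colorings b (Suc h) k. \<sigma> [] = c \<and> \<not> frozen b (Suc h) k \<sigma> []} \<subseteq> (\<Union>c'\<in>?C. S c')"
  proof
    fix \<sigma> assume "\<sigma> \<in> {\<sigma> \<in> colorings b (Suc h) k. \<sigma> [] = c \<and> \<not> frozen b (Suc h) k \<sigma> []}"
    hence s: "\<sigma> \<in> colorings b (Suc h) k" "\<sigma> [] = c" "\<not> frozen b (Suc h) k \<sigma> []" by auto
    from frozen_root[OF s(1) s(3)] obtain c' where "c' \<in> {..<k} - {\<sigma> []}"
      "\<forall>j<b. \<not> (frozen b h k (child b h \<sigma> j) [] \<and> child b h \<sigma> j [] = c')" by blast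
    thus "\<sigma> \<in> (\<Union>c'\<in>?C. S c')" using s unfolding S_def R_def by auto
  qed
  have "card {\<sigma> \<in> colorings b (Suc h) k. \<sigma> [] = c \<and> \<not> frozen b (Suc h) k \<sigma> []} \<le> card (\<Union>c'\<in>?C. S c')"
    by (rule card_mono[OF _ sub]) (use col_finite in \<open>simp add: S_def\<close>)
  also have "\<dots> \<le> (\<Sum>c'\<in>?C. card (S c'))" by (rule card_UN_le) simp
  also have "\<dots> = (\<Sum>c'\<in>?C. T c' ^ b)"
  proof (rule sum.cong)
    fix c' show "card (S c') = T c' ^ b"
      unfolding S_def T_def using card_split[OF c, of b h "\<lambda>_. R c'"] by simp
  qed simp
  finally have L: "card {\<sigma> \<in> colorings b (Suc h) k. \<sigma> [] = c \<and> \<not> frozen b (Suc h) k \<sigma> []} \<le> (\<Sum>c'\<in>?C. T c' ^ b)" .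
  have Tval: "T c' = NF c' + (k - 2) * a" if c': "c' \<in> ?C" for c'
  proof -
    have "T c' = (\<Sum>c''\<in>?C. card {\<tau> \<in> colorings b h k. \<tau> [] = c'' \<and> R c' \<tau>})"
      unfolding T_def by (rule card_ne)
    also have "\<dots> = card {\<tau> \<in> colorings b h k. \<tau> [] = c' \<and> R c' \<tau>}
        + (\<Sum>c''\<in>?C - {c'}. card {\<tau> \<in> colorings b h k. \<tau> [] = c'' \<and> R c' \<tau>})"
      by (rule sum.remove) (use c' in auto)
    also have "card {\<tau> \<in> colorings b h k. \<tau> [] = c' \<and> R c' \<tau>} = NF c'"
      unfolding NF_def R_def by (rule arg_cong[where f=card]) auto
    also have "(\<Sum>c''\<in>?C - {c'}. card {\<tau> \<in> colorings b h k. \<tau> [] = c'' \<and> R c' \<tau>}) = (\<Sum>c''\<in>?C - {c'}. a)"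
    proof (rule sum.cong)
      fix c'' assume "c'' \<in> ?C - {c'}"
      hence "c'' < k" "c'' \<noteq> c'" by auto
      hence "{\<tau> \<in> colorings b h k. \<tau> [] = c'' \<and> R c' \<tau>} = {\<tau> \<in> colorings b h k. \<tau> [] = c''}"
        unfolding R_def by auto
      thus "card {\<tau> \<in> colorings b h k. \<tau> [] = c'' \<and> R c' \<tau>} = a"
        using A_eq[OF \<open>c'' < k\<close>] a_def by simp
    qed simp
    finally have "T c' = NF c' + (\<Sum>c''\<in>?C - {c'}. a)" .
    moreover have "card (?C - {c'}) = k - 2" using c c' by (auto simp: card_Diff_subset)
    ultimately show ?thesis by simp
  qed
  show ?thesis
  proof (cases "k \<ge> 2")
    case False
    hence "?C = {}" using c by auto
    hence "(\<Sum>c'\<in>?C. T c' ^ b) = 0" by (simp only: sum.empty)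
    hence "card {\<sigma> \<in> colorings b (Suc h) k. \<sigma> [] = c \<and> \<not> frozen b (Suc h) k \<sigma> []} = 0" using L by linarith
    thus ?thesis by simp
  next
    case True
    define m where "m = k - 1"
    have m1: "m \<ge> 1" and km: "real k = real m + 1" using True by (auto simp: m_def)
    have per: "real b * real (T c' ^ b) \<le> (real m * real a) ^ b / real m" if c': "c' \<in> ?C" for c'
    proof -
      have "c' < k" using c' by simp
      hence "b * NF c' \<le> a" using IH unfolding NF_def a_def by blast
      hence "real (b * NF c') \<le> real a" by (simp only: of_nat_le_iff)
      hence x: "real b * real (NF c') \<le> real a" by (simp only: of_nat_mult)
      have hb': "real b \<ge> 2 * (real m + 1) * ln (real b)" using hb km by simp
      have t1: "real (T c') = real (NF c') + real (k - 2) * real a" using Tval[OF c'] by simp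
      have t2: "real (k - 2) = real m - 1" using True by (simp add: m_def of_nat_diff)
      have Teq: "real (T c') = real m * real a - real a + real (NF c')"
        unfolding t1 t2 by (simp add: algebra_simps)
      have "real b * real m * real (T c') ^ b \<le> (real m * real a) ^ b"
        using num_core[OF m1 b3 hb' _ _ x] Teq by simp
      thus ?thesis using m1 by (simp add: field_simps)
    qed
    have "b * card {\<sigma> \<in> colorings b (Suc h) k. \<sigma> [] = c \<and> \<not> frozen b (Suc h) k \<sigma> []}
        \<le> b * (\<Sum>c'\<in>?C. T c' ^ b)" using L by (rule mult_le_mono2)
    hence "real (b * card {\<sigma> \<in> colorings b (Suc h) k. \<sigma> [] = c \<and> \<not> frozen b (Suc h) k \<sigma> []})
        \<le> real (b * (\<Sum>c'\<in>?C. T c' ^ b))" by (simp only: of_nat_le_iff)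
    also have "\<dots> = (\<Sum>c'\<in>?C. real b * real (T c' ^ b))" by (simp only: of_nat_mult of_nat_sum sum_distrib_left)
    also have "\<dots> \<le> (\<Sum>c'\<in>?C. (real m * real a) ^ b / real m)" by (rule sum_mono) (rule per)
    also have "\<dots> = real m * ((real m * real a) ^ b / real m)"
      using c by (simp add: m_def)
    also have "\<dots> = real (aa b k (Suc h))" using m1 by (simp add: a_def m_def)
    finally show ?thesis by linarith
  qed
qed

lemma main_step_cons:
  fixes b k h c j :: nat
  assumes c: "c < k" and j: "j < b" and v: "v \<in> tree_vertices b h"
    and IH: "\<And>c'. c' < k \<Longrightarrow> b * card {\<sigma> \<in> colorings b h k. \<sigma> [] = c' \<and> \<not> frozen b h k \<sigma> v} \<le> aa b k h"
  shows "b * card {\<sigma> \<in> colorings b (Suc h) k. \<sigma> [] = c \<and> \<not> frozen b (Suc h) k \<sigma> (j # v)} \<le> aa b k (Suc h)"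
proof -
  define R where "R i \<tau> = (i = j \<longrightarrow> \<not> frozen b h k \<tau> v)" for i \<tau>
  define X where "X = card {\<tau> \<in> colorings b h k. \<tau> [] \<noteq> c \<and> \<not> frozen b h k \<tau> v}"
  define Y where "Y = (k - 1) * aa b k h"
  have sub: "{\<sigma> \<in> colorings b (Suc h) k. \<sigma> [] = c \<and> \<not> frozen b (Suc h) k \<sigma> (j # v)}
      \<subseteq> {\<sigma> \<in> colorings b (Suc h) k. \<sigma> [] = c \<and> (\<forall>i<b. R i (child b h \<sigma> i))}"
  proof
    fix \<sigma> assume "\<sigma> \<in> {\<sigma> \<in> colorings b (Suc h) k. \<sigma> [] = c \<and> \<not> frozen b (Suc h) k \<sigma> (j # v)}"
    hence s: "\<sigma> \<in> colorings b (Suc h) k" "\<sigma> [] = c" "\<not> frozen b (Suc h) k \<sigma> (j # v)" by auto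
    have "\<not> frozen b h k (child b h \<sigma> j) v"
    proof
      assume "frozen b h k (child b h \<sigma> j) v"
      from frozen_cons[OF j v this] s(3) show False by simp
    qed
    hence "\<forall>i<b. R i (child b h \<sigma> i)" unfolding R_def by simp
    thus "\<sigma> \<in> {\<sigma> \<in> colorings b (Suc h) k. \<sigma> [] = c \<and> (\<forall>i<b. R i (child b h \<sigma> i))}" using s by blast
  qed
  have "card {\<sigma> \<in> colorings b (Suc h) k. \<sigma> [] = c \<and> \<not> frozen b (Suc h) k \<sigma> (j # v)}
      \<le> card {\<sigma> \<in> colorings b (Suc h) k. \<sigma> [] = c \<and> (\<forall>i<b. R i (child b h \<sigma> i))}"
    by (rule card_mono[OF _ sub]) (rule finite_subset[OF _ col_finite], blast)
  also have "\<dots> = (\<Prod>i<b. card {\<tau> \<in> colorings b h k. \<tau> [] \<noteq> c \<and> R i \<tau>})"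
    by (rule card_split[OF c])
  also have "\<dots> = card {\<tau> \<in> colorings b h k. \<tau> [] \<noteq> c \<and> R j \<tau>}
      * (\<Prod>i\<in>{..<b} - {j}. card {\<tau> \<in> colorings b h k. \<tau> [] \<noteq> c \<and> R i \<tau>})"
    by (rule prod.remove) (use j in auto)
  also have "card {\<tau> \<in> colorings b h k. \<tau> [] \<noteq> c \<and> R j \<tau>} = X"
    unfolding X_def R_def by simp
  also have "(\<Prod>i\<in>{..<b} - {j}. card {\<tau> \<in> colorings b h k. \<tau> [] \<noteq> c \<and> R i \<tau>}) = (\<Prod>i\<in>{..<b} - {j}. Y)"
  proof (rule prod.cong)
    fix i assume "i \<in> {..<b} - {j}"
    hence "{\<tau> \<in> colorings b h k. \<tau> [] \<noteq> c \<and> R i \<tau>} = {\<tau> \<in> colorings b h k. \<tau> [] \<noteq> c}"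
      unfolding R_def by auto
    thus "card {\<tau> \<in> colorings b h k. \<tau> [] \<noteq> c \<and> R i \<tau>} = Y" using card_ne_all[OF c] Y_def by simp
  qed simp
  also have "(\<Prod>i\<in>{..<b} - {j}. Y) = Y ^ (b - 1)" using j by simp
  finally have L: "card {\<sigma> \<in> colorings b (Suc h) k. \<sigma> [] = c \<and> \<not> frozen b (Suc h) k \<sigma> (j # v)} \<le> X * Y ^ (b - 1)" .
  have "X = (\<Sum>c'\<in>{..<k} - {c}. card {\<tau> \<in> colorings b h k. \<tau> [] = c' \<and> \<not> frozen b h k \<tau> v})"
    unfolding X_def by (rule card_ne)
  hence "b * X = (\<Sum>c'\<in>{..<k} - {c}. b * card {\<tau> \<in> colorings b h k. \<tau> [] = c' \<and> \<not> frozen b h k \<tau> v})"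
    by (simp add: sum_distrib_left)
  also have "\<dots> \<le> (\<Sum>c'\<in>{..<k} - {c}. aa b k h)" by (rule sum_mono) (use IH in auto)
  also have "\<dots> = Y" using c by (simp add: Y_def)
  finally have bX: "b * X \<le> Y" .
  have "b * card {\<sigma> \<in> colorings b (Suc h) k. \<sigma> [] = c \<and> \<not> frozen b (Suc h) k \<sigma> (j # v)}
      \<le> b * (X * Y ^ (b - 1))" using L by simp
  also have "\<dots> = (b * X) * Y ^ (b - 1)" by simp
  also have "\<dots> \<le> Y * Y ^ (b - 1)" using bX by (rule mult_right_mono) simp
  also have "\<dots> = Y ^ b" using j by (cases b) auto
  also have "\<dots> = aa b k (Suc h)" by (simp add: Y_def)
  finally show ?thesis .
qed

lemma main:
  fixes b k h :: nat
  assumes b3: "b \<ge> 3" and hb: "real b \<ge> 2 * real k * ln (real b)"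
  shows "v \<in> tree_vertices b h \<Longrightarrow> c < k \<Longrightarrow>
    b * card {\<sigma> \<in> colorings b h k. \<sigma> [] = c \<and> \<not> frozen b h k \<sigma> v} \<le> aa b k h"
proof (induction h arbitrary: v c)
  case 0
  hence "v = []" by (simp add: tv_0)
  thus ?case using frozen_0 by simp
next
  case (Suc h)
  show ?case
  proof (cases v)
    case Nil
    then show ?thesis using main_step_root[OF b3 hb Suc.prems(2)] Suc.IH[of "[]"] by simp
  next
    case (Cons j v')
    then have "j < b" "v' \<in> tree_vertices b h" using Suc.prems by auto
    then show ?thesis using main_step_cons[OF Suc.prems(2)] Suc.IH Cons by simp
  qed
qed


theorem lemma12:
  "\<exists>B::nat. \<forall>b k h :: nat. \<forall>v.
     b \<ge> B \<longrightarrow> real b / (real k * ln (real b)) \<ge> 2 \<longrightarrow> v \<in> tree_vertices b h \<longrightarrow>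
     real (card {sigma \<in> colorings b h k. \<not> frozen b h k sigma v})
       / real (card (colorings b h k)) \<le> 1 / real b"
proof (intro exI[of _ 3] allI impI)
  fix b k h :: nat and v
  assume b3: "3 \<le> b" and r: "2 \<le> real b / (real k * ln (real b))" and v: "v \<in> tree_vertices b h"
  have lnpos: "ln (real b) > 0" using b3 by simp
  have kpos: "k > 0"
  proof (rule ccontr)
    assume "\<not> k > 0" hence "k = 0" by simp
    thus False using r by simp
  qed
  have dpos: "real k * ln (real b) > 0" using kpos lnpos by simp
  have hb: "real b \<ge> 2 * real k * ln (real b)" using r dpos by (simp add: le_divide_eq mult.assoc)
  define N where "N = card {sigma \<in> colorings b h k. \<not> frozen b h k sigma v}"
  define D where "D = card (colorings b h k)"
  have N: "N = (\<Sum>c<k. card {\<sigma> \<in> colorings b h k. \<sigma> [] = c \<and> \<not> frozen b h k \<sigma> v})"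
    unfolding N_def by (rule card_all)
  have "D = card {\<tau> \<in> colorings b h k. True}" unfolding D_def by simp
  also have "\<dots> = (\<Sum>c<k. card {\<tau> \<in> colorings b h k. \<tau> [] = c \<and> True})" by (rule card_all)
  also have "\<dots> = (\<Sum>c<k. aa b k h)" by (rule sum.cong) (use A_eq in auto)
  finally have D: "D = (\<Sum>c<k. aa b k h)" .
  have "b * N = (\<Sum>c<k. b * card {\<sigma> \<in> colorings b h k. \<sigma> [] = c \<and> \<not> frozen b h k \<sigma> v})"
    unfolding N by (simp add: sum_distrib_left)
  also have "\<dots> \<le> (\<Sum>c<k. aa b k h)" by (rule sum_mono) (use main[OF b3 hb v] in auto)
  finally have bN: "b * N \<le> D" using D by simp
  show "real N / real D \<le> 1 / real b" unfolding N_def[symmetric] D_def[symmetric]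
  proof (cases "D = 0")
    case True thus ?thesis by simp
  next
    case False
    have "real b * real N \<le> real D" using bN by (metis of_nat_le_iff of_nat_mult)
    thus ?thesis using False b3 by (simp add: field_simps)
  qed
qed


end
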